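(* Let $K\ge 2$ and let $M,N,d$ be positive integers with $d\le\min(M,N)$. The symmetric system $(M\times N,d)^K$ is proper if and only if $N_v\ge N_e$, where $N_v=Kd(M+N-2d)$ and $N_e=K(K-1)d^2$; equivalently, it is proper if and only if \[ M+N-(K+1)d\ge 0 . \]
   Context: $(M\times N,d)^K$ denotes the $K$-user system $\prod_{k=1}^K(M^{[k]}\times N^{[k]},d^{[k]})$ with $M^{[k]}=M$, $N^{[k]}=N$, $d^{[k]}=d$ for all $k$. For a general $K$-user system $\prod_{k=1}^K(M^{[k]}\times N^{[k]},d^{[k]})$ (transmitter $k$ has $M^{[k]}$ antennas, receiver $k$ has $N^{[k]}$, user $k$ demands $d^{[k]}$ degrees of freedom), associate abstract variables: for each transmitter $j$ and $n\in\{1,\dots,d^{[j]}\}$, the $M^{[j]}-d^{[j]}$ variables $x^{[j]}_{n,1},\dots,x^{[j]}_{n,M^{[j]}-d^{[j]}}$; for each receiver $k$ and $m\in\{1,\dots,d^{[k]}\}$, the $N^{[k]}-d^{[k]}$ variables $y^{[k]}_{m,1},\dots,y^{[k]}_{m,N^{[k]}-d^{[k]}}$. The equations are the symbols $E^{mn}_{kj}$ for $j\ne k$, $m\le d^{[k]}$, $n\le d^{[j]}$ (standing for $\mathbf u^{[k]\dagger}_m\mathbf H^{[kj]}\mathbf v^{[j]}_n=0$); $\mathcal E$ is the set of all of them, and $\mathrm{var}(E^{mn}_{kj})=\{x^{[j]}_{n,i}\}_{i}\cup\{y^{[k]}_{m,i}\}_{i}$. The system is proper if for every $S\subseteq\mathcal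 E$, $|S|\le\left|\bigcup_{E\in S}\mathrm{var}(E)\right|$, and improper otherwise. $N_v$ is the total number of variables, $\sum_k d^{[k]}(M^{[k]}+N^{[k]}-2d^{[k]})$, and $N_e=|\mathcal E|=\sum_{k\ne j}d^{[k]}d^{[j]}$. *)

theory Defs
  imports Main
begin

(* A K-user MIMO interference system: users are indexed 0..K-1;
   Mt k = M^[k] (transmit antennas), Nr k = N^[k] (receive antennas),
   dd k = d^[k] (degrees of freedom). Stream indices are 0-based. *)

datatype var =
    XVar nat nat nat   (* XVar j n i  =  x^[j]_{n,i} *)
  | YVar nat nat nat   (* YVar k m i  =  y^[k]_{m,i} *)

(* equation E^{mn}_{kj} is represented by the tuple (k, j, m, n) *)
definition equations :: "nat \<Rightarrow> (nat \<Rightarrow> nat) \<Rightarrow> (nat \<times> nat \<times> nat \<times> nat) set" where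
  "equations K dd = {(k, j, m, n). k < K \<and> j < K \<and> j \<noteq> k \<and> m < dd k \<and> n < dd j}"

definition eq_vars ::
  "(nat \<Rightarrow> nat) \<Rightarrow> (nat \<Rightarrow> nat) \<Rightarrow> (nat \<Rightarrow> nat) \<Rightarrow> nat \<times> nat \<times> nat \<times> nat \<Rightarrow> var set" where
  "eq_vars Mt Nr dd E = (case E of (k, j, m, n) \<Rightarrow>
      {XVar j n i | i. i < Mt j - dd j} \<union> {YVar k m i | i. i < Nr k - dd k})"

definition proper_system ::
  "nat \<Rightarrow> (nat \<Rightarrow> nat) \<Rightarrow> (nat \<Rightarrow> nat) \<Rightarrow> (nat \<Rightarrow> nat) \<Rightarrow> bool" where
  "proper_system K Mt Nr dd \<longleftrightarrow>
     (\<forall>S \<subseteq> equations K dd. card S \<le> card (\<Union>E\<in>S. eq_vars Mt Nr dd E))"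

definition num_vars :: "nat \<Rightarrow> (nat \<Rightarrow> nat) \<Rightarrow> (nat \<Rightarrow> nat) \<Rightarrow> (nat \<Rightarrow> nat) \<Rightarrow> nat" where
  "num_vars K Mt Nr dd = (\<Sum>k<K. dd k * (Mt k + Nr k - 2 * dd k))"

definition num_eqs :: "nat \<Rightarrow> (nat \<Rightarrow> nat) \<Rightarrow> nat" where
  "num_eqs K dd = card (equations K dd)"

end

theory Submission
  imports Defs
begin

lemma eqs_eq: "equations K (\<lambda>_. d) = Sigma {..<K} (\<lambda>k. Sigma ({..<K}-{k}) (\<lambda>j. {..<d} \<times> {..<d}))"
  by (auto simp: equations_def)

lemma fin_eqs: "finite (equations K (\<lambda>_. d))"
  unfolding eqs_eq by auto

lemma card_eqs: "card (equations K (\<lambda>_. d)) = K * (K - 1) * d ^ 2"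
proof -
  have "card (equations K (\<lambda>_. d)) = (\<Sum>k<K. card (Sigma ({..<K}-{k}) (\<lambda>j. {..<d} \<times> {..<d})))"
    unfolding eqs_eq by (rule card_SigmaI) auto
  also have "\<dots> = (\<Sum>k<K. (K - 1) * (d * d))"
    by (rule sum.cong) (auto simp: card_cartesian_product)
  finally show ?thesis by (simp add: power2_eq_square)
qed

definition TT :: "(nat \<times> nat \<times> nat \<times> nat) set \<Rightarrow> (nat \<times> nat) set" where
  "TT S = (\<lambda>(k,j,m,n). (j,n)) ` S"
definition RR :: "(nat \<times> nat \<times> nat \<times> nat) set \<Rightarrow> (nat \<times> nat) set" where
  "RR S = (\<lambda>(k,j,m,n). (k,m)) ` S"

lemma vars_eq: "(\<Union>E\<in>S. eq_vars (\<lambda>_. M) (\<lambda>_. N) (\<lambda>_. d) E) =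
   (\<lambda>((j,n),i). XVar j n i) ` (TT S \<times> {..<M-d}) \<union> (\<lambda>((k,m),i). YVar k m i) ` (RR S \<times> {..<N-d})"
proof (intro equalityI subsetI)
  fix v assume "v \<in> (\<Union>E\<in>S. eq_vars (\<lambda>_. M) (\<lambda>_. N) (\<lambda>_. d) E)"
  then obtain k j m n where e: "(k,j,m,n) \<in> S" and v: "v \<in> eq_vars (\<lambda>_. M) (\<lambda>_. N) (\<lambda>_. d) (k,j,m,n)"
    by (metis UN_E prod_cases4)
  have t: "(j,n) \<in> TT S" using e unfolding TT_def by force
  have r: "(k,m) \<in> RR S" using e unfolding RR_def by force
  from v consider i where "v = XVar j n i" "i < M - d" | i where "v = YVar k m i" "i < N - d"
    unfolding eq_vars_def by auto
  thus "v \<in> (\<lambda>((j,n),i). XVar j n i) ` (TT S \<times> {..<M-d}) \<union> (\<lambda>((k,m),i). YVar k m i) ` (RR S \<times> {..<N-d})"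
  proof cases
    case (1 i) thus ?thesis using t by (intro UnI1 image_eqI[of _ _ "((j,n),i)"]) auto
  next
    case (2 i) thus ?thesis using r by (intro UnI2 image_eqI[of _ _ "((k,m),i)"]) auto
  qed
next
  fix v assume "v \<in> (\<lambda>((j,n),i). XVar j n i) ` (TT S \<times> {..<M-d}) \<union> (\<lambda>((k,m),i). YVar k m i) ` (RR S \<times> {..<N-d})"
  then consider j n i where "(j,n) \<in> TT S" "i < M-d" "v = XVar j n i"
    | k m i where "(k,m) \<in> RR S" "i < N-d" "v = YVar k m i" by auto
  thus "v \<in> (\<Union>E\<in>S. eq_vars (\<lambda>_. M) (\<lambda>_. N) (\<lambda>_. d) E)"
  proof cases
    case (1 j n i)
    then obtain k m where "(k,j,m,n) \<in> S" unfolding TT_def by auto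
    thus ?thesis using 1 unfolding eq_vars_def by (intro UN_I[of "(k,j,m,n)"]) auto
  next
    case (2 k m i)
    then obtain j n where "(k,j,m,n) \<in> S" unfolding RR_def by auto
    thus ?thesis using 2 unfolding eq_vars_def by (intro UN_I[of "(k,j,m,n)"]) auto
  qed
qed

lemma card_vars:
  assumes "finite S"
  shows "card (\<Union>E\<in>S. eq_vars (\<lambda>_. M) (\<lambda>_. N) (\<lambda>_. d) E) = card (TT S) * (M-d) + card (RR S) * (N-d)"
proof -
  have f: "finite (TT S)" "finite (RR S)" using assms by (auto simp: TT_def RR_def)
  have i1: "inj_on (\<lambda>((j,n),i). XVar j n i) (TT S \<times> {..<M-d})" by (auto simp: inj_on_def)
  have i2: "inj_on (\<lambda>((k,m),i). YVar k m i) (RR S \<times> {..<N-d})" by (auto simp: inj_on_def)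
  show ?thesis unfolding vars_eq
    apply (subst card_Un_disjoint)
    using f apply auto[3]
    using card_image[OF i1] card_image[OF i2] by (simp add: card_cartesian_product)
qed

lemma bound_T:
  assumes "S \<subseteq> equations K (\<lambda>_. d)"
  shows "card S \<le> (K-1)*d * card (TT S)"
proof -
  define F where "F = (\<lambda>(j::nat,n::nat). (\<lambda>(k,m). (k,j,m,n)) ` (({..<K}-{j}) \<times> {..<d}))"
  have fin: "finite (TT S)" using finite_subset[OF assms fin_eqs] by (simp add: TT_def)
  have "S \<subseteq> (\<Union>p\<in>TT S. F p)"
  proof
    fix e assume "e \<in> S"
    then obtain k j m n where e: "e = (k,j,m,n)" and "(k,j,m,n) \<in> S" by (cases e) auto
    hence "(j,n) \<in> TT S" by (force simp: TT_def)
    moreover have "e \<in> F (j,n)" using assms \<open>(k,j,m,n) \<in> S\<close> e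
      by (auto simp: F_def equations_def)
    ultimately show "e \<in> (\<Union>p\<in>TT S. F p)" by blast
  qed
  hence "card S \<le> card (\<Union>p\<in>TT S. F p)"
    by (rule card_mono[rotated]) (auto simp: F_def fin)
  also have "\<dots> \<le> (\<Sum>p\<in>TT S. card (F p))" by (rule card_UN_le[OF fin])
  also have "\<dots> \<le> (\<Sum>p\<in>TT S. (K-1)*d)"
  proof (rule sum_mono)
    fix p assume "p \<in> TT S"
    then obtain j n where p: "p = (j,n)" and "j < K"
      using assms by (auto simp: TT_def equations_def)
    have "card (F p) \<le> card (({..<K}-{j}) \<times> {..<d})" unfolding p F_def by (simp only: prod.case) (rule card_image_le, simp)
    also have "\<dots> = (K-1)*d" using \<open>j<K\<close> by (simp add: card_cartesian_product)
    finally show "card (F p) \<le> (K-1)*d" .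
  qed
  finally show ?thesis by (simp add: mult.commute)
qed

lemma bound_R:
  assumes "S \<subseteq> equations K (\<lambda>_. d)"
  shows "card S \<le> (K-1)*d * card (RR S)"
proof -
  define F where "F = (\<lambda>(k::nat,m::nat). (\<lambda>(j,n). (k,j,m,n)) ` (({..<K}-{k}) \<times> {..<d}))"
  have fin: "finite (RR S)" using finite_subset[OF assms fin_eqs] by (simp add: RR_def)
  have "S \<subseteq> (\<Union>p\<in>RR S. F p)"
  proof
    fix e assume "e \<in> S"
    then obtain k j m n where e: "e = (k,j,m,n)" and "(k,j,m,n) \<in> S" by (cases e) auto
    hence "(k,m) \<in> RR S" by (force simp: RR_def)
    moreover have "e \<in> F (k,m)" using assms \<open>(k,j,m,n) \<in> S\<close> e
      by (auto simp: F_def equations_def)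
    ultimately show "e \<in> (\<Union>p\<in>RR S. F p)" by blast
  qed
  hence "card S \<le> card (\<Union>p\<in>RR S. F p)"
    by (rule card_mono[rotated]) (auto simp: F_def fin)
  also have "\<dots> \<le> (\<Sum>p\<in>RR S. card (F p))" by (rule card_UN_le[OF fin])
  also have "\<dots> \<le> (\<Sum>p\<in>RR S. (K-1)*d)"
  proof (rule sum_mono)
    fix p assume "p \<in> RR S"
    then obtain k m where p: "p = (k,m)" and "k < K"
      using assms by (auto simp: RR_def equations_def)
    have "card (F p) \<le> card (({..<K}-{k}) \<times> {..<d})" unfolding p F_def by (simp only: prod.case) (rule card_image_le, simp)
    also have "\<dots> = (K-1)*d" using \<open>k<K\<close> by (simp add: card_cartesian_product)
    finally show "card (F p) \<le> (K-1)*d" .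
  qed
  finally show ?thesis by (simp add: mult.commute)
qed

lemma TT_all: "(K::nat) \<ge> 2 \<Longrightarrow> TT (equations K (\<lambda>_. d)) = {..<K} \<times> {..<d}"
proof (intro equalityI subsetI)
  fix p assume "K \<ge> 2" "p \<in> {..<K} \<times> {..<d}"
  then obtain j n where p: "p = (j,n)" "j < K" "n < d" by auto
  define k :: nat where "k = (if j = 0 then 1 else 0)"
  have "k < K" "k \<noteq> j" using \<open>K \<ge> 2\<close> p by (auto simp: k_def)
  with p have "(k,j,0,n) \<in> equations K (\<lambda>_. d)" by (auto simp: equations_def)
  thus "p \<in> TT (equations K (\<lambda>_. d))" unfolding TT_def p by force
qed (auto simp: TT_def equations_def)

lemma RR_all: "(K::nat) \<ge> 2 \<Longrightarrow> RR (equations K (\<lambda>_. d)) = {..<K} \<times> {..<d}"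
proof (intro equalityI subsetI)
  fix p assume "K \<ge> 2" "p \<in> {..<K} \<times> {..<d}"
  then obtain k m where p: "p = (k,m)" "k < K" "m < d" by auto
  define j :: nat where "j = (if k = 0 then 1 else 0)"
  have "j < K" "k \<noteq> j" using \<open>K \<ge> 2\<close> p by (auto simp: j_def)
  with p have "(k,j,m,0) \<in> equations K (\<lambda>_. d)" by (auto simp: equations_def)
  thus "p \<in> RR (equations K (\<lambda>_. d))" unfolding RR_def p by force
qed (auto simp: RR_def equations_def)

theorem theorem2:
  fixes K M N d :: nat
  assumes "K \<ge> 2" and "0 < M" and "0 < N" and "0 < d" and "d \<le> min M N"
  shows "num_vars K (\<lambda>_. M) (\<lambda>_. N) (\<lambda>_. d) = K * d * (M + N - 2 * d)
       \<and> num_eqs K (\<lambda>_. d) = K * (K - 1) * d ^ 2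
       \<and> (proper_system K (\<lambda>_. M) (\<lambda>_. N) (\<lambda>_. d)
            \<longleftrightarrow> num_eqs K (\<lambda>_. d) \<le> num_vars K (\<lambda>_. M) (\<lambda>_. N) (\<lambda>_. d))
       \<and> (proper_system K (\<lambda>_. M) (\<lambda>_. N) (\<lambda>_. d)
            \<longleftrightarrow> int M + int N - (int K + 1) * int d \<ge> 0)"
proof -
  have NV: "num_vars K (\<lambda>_. M) (\<lambda>_. N) (\<lambda>_. d) = K * d * (M + N - 2 * d)"
    by (simp add: num_vars_def)
  have NE: "num_eqs K (\<lambda>_. d) = K * (K - 1) * d ^ 2" by (simp add: num_eqs_def card_eqs)
  have e1: "M + N - 2*d = (M-d) + (N-d)" using assms by auto
  have Kd: "K*d > 0" using assms by simp
  have cond: "(int M + int N - (int K + 1) * int d \<ge> 0) \<longleftrightarrow> (K-1)*d \<le> (M-d)+(N-d)"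
  proof -
    have i1: "int ((K-1)*d) = int K * int d - int d" using assms by (simp add: of_nat_diff algebra_simps)
    have i2: "int ((M-d)+(N-d)) = int M + int N - 2 * int d" using assms by (simp add: of_nat_diff)
    have "int M + int N - (int K + 1) * int d = int ((M-d)+(N-d)) - int ((K-1)*d)"
      unfolding i1 i2 by (simp add: algebra_simps)
    thus ?thesis by linarith
  qed
  have cmp: "(K * (K - 1) * d ^ 2 \<le> K * d * (M + N - 2 * d)) \<longleftrightarrow> (K-1)*d \<le> (M-d)+(N-d)"
  proof -
    have "K * (K - 1) * d ^ 2 = (K*d) * ((K-1)*d)" by (simp add: power2_eq_square algebra_simps)
    moreover have "K * d * (M + N - 2 * d) = (K*d) * ((M-d)+(N-d))" using e1 by simp
    ultimately show ?thesis using Kd by (simp only: mult_le_cancel1) simp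
  qed
  have P: "proper_system K (\<lambda>_. M) (\<lambda>_. N) (\<lambda>_. d) \<longleftrightarrow> (K-1)*d \<le> (M-d)+(N-d)"
  proof
    assume pr: "proper_system K (\<lambda>_. M) (\<lambda>_. N) (\<lambda>_. d)"
    let ?E = "equations K (\<lambda>_. d)"
    have "card ?E \<le> card (\<Union>E\<in>?E. eq_vars (\<lambda>_. M) (\<lambda>_. N) (\<lambda>_. d) E)"
      using pr unfolding proper_system_def by blast
    also have "\<dots> = K*d*(M-d) + K*d*(N-d)"
      using card_vars[OF fin_eqs] TT_all[OF assms(1)] RR_all[OF assms(1)] by simp
    also have "\<dots> = K * d * (M + N - 2 * d)" using e1 by (simp add: algebra_simps)
    finally have "K * (K - 1) * d ^ 2 \<le> K * d * (M + N - 2 * d)" by (simp only: card_eqs)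
    with cmp show "(K-1)*d \<le> (M-d)+(N-d)" by blast
  next
    assume h: "(K-1)*d \<le> (M-d)+(N-d)"
    obtain a b where ab: "a + b = (K-1)*d" "a \<le> M-d" "b \<le> N-d"
    proof (cases "(K-1)*d \<le> M-d")
      case True thus ?thesis using that[of "(K-1)*d" 0] by simp
    next
      case False thus ?thesis using that[of "M-d" "(K-1)*d - (M-d)"] h by simp
    qed
    have pos: "(K-1)*d > 0" using assms by simp
    show "proper_system K (\<lambda>_. M) (\<lambda>_. N) (\<lambda>_. d)" unfolding proper_system_def
    proof (intro allI impI)
      fix S assume S: "S \<subseteq> equations K (\<lambda>_. d)"
      have fS: "finite S" using finite_subset[OF S fin_eqs] .
      have "(K-1)*d * card S = a * card S + b * card S" unfolding ab(1)[symmetric] by (rule add_mult_distrib)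
      also have "\<dots> \<le> a * ((K-1)*d * card (TT S)) + b * ((K-1)*d * card (RR S))"
        using bound_T[OF S] bound_R[OF S] by (intro add_mono mult_le_mono2)
      also have "\<dots> = (K-1)*d * (a * card (TT S) + b * card (RR S))" by (simp add: algebra_simps)
      finally have X: "(K-1)*d * card S \<le> (K-1)*d * (a * card (TT S) + b * card (RR S))" .
      have "card S \<le> a * card (TT S) + b * card (RR S)" using X pos mult_le_cancel1 by blast
      also have "\<dots> \<le> card (TT S) * (M-d) + card (RR S) * (N-d)"
      proof (rule add_mono)
        show "a * card (TT S) \<le> card (TT S) * (M-d)" by (subst mult.commute) (rule mult_le_mono1[OF ab(2)])
        show "b * card (RR S) \<le> card (RR S) * (N-d)" by (subst mult.commute) (rule mult_le_mono1[OF ab(3)])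
      qed
      also have "\<dots> = card (\<Union>E\<in>S. eq_vars (\<lambda>_. M) (\<lambda>_. N) (\<lambda>_. d) E)"
        using card_vars[OF fS] by simp
      finally show "card S \<le> card (\<Union>E\<in>S. eq_vars (\<lambda>_. M) (\<lambda>_. N) (\<lambda>_. d) E)" .
    qed
  qed
  have Q: "proper_system K (\<lambda>_. M) (\<lambda>_. N) (\<lambda>_. d) \<longleftrightarrow> num_eqs K (\<lambda>_. d) \<le> num_vars K (\<lambda>_. M) (\<lambda>_. N) (\<lambda>_. d)"
    unfolding NV NE using P cmp by blast
  show ?thesis using NV NE Q P cond by (intro conjI) blast+
qed

end
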